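(* Let $f=(f_1,f_2):\mathbb{R}^2\to\mathbb{R}^2$ be smooth, $g=f_1^2+f_2^2$, $\delta>0$ with $\delta^2$ a regular value of $g$ and $P=g^{-1}(\delta^2)\neq\emptyset$. Let $J=\partial(f_1,f_2)/\partial(x_1,x_2)$ and $F_j=\partial(f_j,J)/\partial(x_1,x_2)$, $j=1,2$. Let $T=(-\partial g/\partial x_2,\partial g/\partial x_1)$, a non-vanishing tangent vector field on $P$. For $p\in P$ let $x(t)$ be the integral curve of $T$ in $P$ with $x(0)=p$, and let $\theta$ be a smooth function near $0$ with $f(x(t))=(\delta\cos\theta(t),\delta\sin\theta(t))$. Suppose $p$ is a critical point of $f|P:P\to S^1(\delta)$. Then $$\operatorname{sign}(\theta''(0))=\operatorname{sign}\big(f_1F_1+f_2F_2\big)(p).$$ In particular, $p\in P$ is a non-degenerate critical point of $f|P$ if and only if $J(p)=0$ and $(f_1F_1+f_2F_2)(p)\neq0$.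
   Context: $S^1(\delta)$ is the circle of radius $\delta$ centered at the origin. *)

theory Defs
  imports "HOL-Analysis.Analysis"
begin

definition pd1 :: "(real \<times> real \<Rightarrow> real) \<Rightarrow> real \<times> real \<Rightarrow> real" where
  "pd1 h = (\<lambda>(a, b). deriv (\<lambda>t. h (t, b)) a)"

definition pd2 :: "(real \<times> real \<Rightarrow> real) \<Rightarrow> real \<times> real \<Rightarrow> real" where
  "pd2 h = (\<lambda>(a, b). deriv (\<lambda>t. h (a, t)) b)"

definition pd :: "bool \<Rightarrow> (real \<times> real \<Rightarrow> real) \<Rightarrow> real \<times> real \<Rightarrow> real" where
  "pd i h = (if i then pd2 h else pd1 h)"

text \<open>Smooth (C-infinity) function R^2 -> R: every iterated partial derivative
(of every order, including order 0) exists and is (Frechet) differentiable everywhere.\<close>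
definition smooth2 :: "(real \<times> real \<Rightarrow> real) \<Rightarrow> bool" where
  "smooth2 h \<longleftrightarrow> (\<forall>is :: bool list. \<forall>x. foldr pd is h differentiable (at x))"

definition smooth1_on :: "real set \<Rightarrow> (real \<Rightarrow> real) \<Rightarrow> bool" where
  "smooth1_on S h \<longleftrightarrow> (\<forall>n. \<forall>t\<in>S. (deriv ^^ n) h field_differentiable (at t))"

definition jac :: "(real \<times> real \<Rightarrow> real) \<Rightarrow> (real \<times> real \<Rightarrow> real) \<Rightarrow> real \<times> real \<Rightarrow> real" where
  "jac u v = (\<lambda>x. pd1 u x * pd2 v x - pd2 u x * pd1 v x)"

definition dir :: "(real \<times> real \<Rightarrow> real) \<Rightarrow> real \<times> real \<Rightarrow> real \<times> real \<Rightarrow> real" where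
  "dir h x v = pd1 h x * fst v + pd2 h x * snd v"

text \<open>Critical point of f|P : P -> S^1(delta), where P = g^{-1}(c) is a level set
of g at a regular value (so the tangent space of P at p is the kernel of dg(p)):
the differential of f vanishes on the tangent space of P at p.\<close>
definition crit_restr ::
  "(real \<times> real \<Rightarrow> real) \<Rightarrow> (real \<times> real \<Rightarrow> real) \<Rightarrow> (real \<times> real \<Rightarrow> real)
    \<Rightarrow> real \<Rightarrow> real \<times> real \<Rightarrow> bool" where
  "crit_restr f1 f2 g c p \<longleftrightarrow> g p = c \<and>
     (\<forall>v. dir g p v = 0 \<longrightarrow> dir f1 p v = 0 \<and> dir f2 p v = 0)"

text \<open>Non-degenerate critical point of f|P : P -> S^1(delta): a critical point
at which, in local coordinates (a regular smooth local parametrisation gamma of P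
with gamma(0) = p, and an angle coordinate theta on the circle), the second
derivative of the local representative theta is non-zero.\<close>
definition nondeg_crit_restr ::
  "(real \<times> real \<Rightarrow> real) \<Rightarrow> (real \<times> real \<Rightarrow> real) \<Rightarrow> (real \<times> real \<Rightarrow> real)
    \<Rightarrow> real \<Rightarrow> real \<times> real \<Rightarrow> bool" where
  "nondeg_crit_restr f1 f2 g \<delta> p \<longleftrightarrow> crit_restr f1 f2 g (\<delta>\<^sup>2) p \<and>
     (\<exists>\<epsilon> (\<gamma> :: real \<Rightarrow> real \<times> real) \<theta> \<gamma>'. \<epsilon> > 0 \<and> \<gamma> 0 = p \<and>
        (\<forall>t\<in>{-\<epsilon><..<\<epsilon>}. g (\<gamma> t) = \<delta>\<^sup>2) \<and>
        smooth1_on {-\<epsilon><..<\<epsilon>} (fst \<circ> \<gamma>) \<and> smooth1_on {-\<epsilon><..<\<epsilon>} (snd \<circ> \<gamma>) \<and>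
        (\<gamma> has_vector_derivative \<gamma>') (at 0) \<and> \<gamma>' \<noteq> 0 \<and>
        smooth1_on {-\<epsilon><..<\<epsilon>} \<theta> \<and>
        (\<forall>t\<in>{-\<epsilon><..<\<epsilon>}. f1 (\<gamma> t) = \<delta> * cos (\<theta> t) \<and> f2 (\<gamma> t) = \<delta> * sin (\<theta> t)) \<and>
        deriv (deriv \<theta>) 0 \<noteq> 0)"

end

theory Submission
  imports Defs
begin


lemma pd1_eq: "pd1 H x = deriv (\<lambda>t. H (t, snd x)) (fst x)"
  by (cases x) (simp add: pd1_def)
lemma pd2_eq: "pd2 H x = deriv (\<lambda>t. H (fst x, t)) (snd x)"
  by (cases x) (simp add: pd2_def)

lemma pd_from_deriv:
  fixes H :: "real \<times> real \<Rightarrow> real"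
  assumes D: "(H has_derivative D) (at x)"
  shows "pd1 H x = D (1,0)" "pd2 H x = D (0,1)"
proof -
  have lin: "linear D" using D has_derivative_linear by blast
  have c1: "((\<lambda>t. (t, snd x)) has_derivative (\<lambda>s. (s, 0))) (at (fst x))"
    by (auto intro!: derivative_eq_intros)
  have "((\<lambda>t. H (t, snd x)) has_derivative (\<lambda>s. D (s, 0))) (at (fst x))"
    using has_derivative_compose[OF c1, of H D] D by (cases x) (simp add: o_def)
  moreover have "(\<lambda>s. D (s, 0)) = (\<lambda>s. s * D (1,0))"
  proof
    fix s :: real
    show "D (s, 0) = s * D (1,0)" using linear_scale[OF lin, of s "(1,0)"] by simp
  qed
  ultimately have "((\<lambda>t. H (t, snd x)) has_field_derivative D (1,0)) (at (fst x))"
    by (simp add: has_field_derivative_def mult_commute_abs)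
  then show "pd1 H x = D (1,0)" by (simp add: pd1_eq DERIV_imp_deriv)
  have c2: "((\<lambda>t. (fst x, t)) has_derivative (\<lambda>s. (0, s))) (at (snd x))"
    by (auto intro!: derivative_eq_intros)
  have "((\<lambda>t. H (fst x, t)) has_derivative (\<lambda>s. D (0, s))) (at (snd x))"
    using has_derivative_compose[OF c2, of H D] D by (cases x) (simp add: o_def)
  moreover have "(\<lambda>s. D (0, s)) = (\<lambda>s. s * D (0,1))"
  proof
    fix s :: real
    show "D (0, s) = s * D (0,1)" using linear_scale[OF lin, of s "(0,1)"] by simp
  qed
  ultimately have "((\<lambda>t. H (fst x, t)) has_field_derivative D (0,1)) (at (snd x))"
    by (simp add: has_field_derivative_def mult_commute_abs)
  then show "pd2 H x = D (0,1)" by (simp add: pd2_eq DERIV_imp_deriv)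
qed

lemma pd_has_derivative:
  fixes H :: "real \<times> real \<Rightarrow> real"
  assumes "H differentiable (at x)"
  shows "(H has_derivative (\<lambda>v. pd1 H x * fst v + pd2 H x * snd v)) (at x)"
proof -
  obtain D where D: "(H has_derivative D) (at x)" using assms differentiable_def by blast
  have lin: "linear D" using D has_derivative_linear by blast
  have "D = (\<lambda>v. pd1 H x * fst v + pd2 H x * snd v)"
  proof
    fix v :: "real \<times> real"
    have "v = fst v *\<^sub>R (1,0) + snd v *\<^sub>R (0,1)" by (cases v) simp
    then have "D v = D (fst v *\<^sub>R (1,0) + snd v *\<^sub>R (0,1))" by simp
    also have "\<dots> = fst v * D (1,0) + snd v * D (0,1)"
      using linear_add[OF lin, of "fst v *\<^sub>R (1,0)" "snd v *\<^sub>R (0,1)"]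
        linear_scale[OF lin, of "fst v" "(1,0)"] linear_scale[OF lin, of "snd v" "(0,1)"] by simp
    finally show "D v = pd1 H x * fst v + pd2 H x * snd v"
      using pd_from_deriv[OF D] by (simp add: mult.commute)
  qed
  then show ?thesis using D by simp
qed

lemma pd_local:
  fixes h k :: "real \<times> real \<Rightarrow> real"
  assumes "open U" "x \<in> U" "\<And>y. y \<in> U \<Longrightarrow> h y = k y"
  shows "pd1 h x = pd1 k x" "pd2 h x = pd2 k x"
proof -
  have o1: "open {t. (t, snd x) \<in> U}"
  proof -
    have "continuous_on UNIV (\<lambda>t::real. (t, snd x))" by (intro continuous_intros)
    from open_vimage[OF assms(1) this] show ?thesis by (simp add: vimage_def)
  qed
  have o2: "open {t. (fst x, t) \<in> U}"
  proof -
    have "continuous_on UNIV (\<lambda>t::real. (fst x, t))" by (intro continuous_intros)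
    from open_vimage[OF assms(1) this] show ?thesis by (simp add: vimage_def)
  qed
  have e1: "eventually (\<lambda>t. H1 t = H2 t) (nhds (fst x))" if "H1 = (\<lambda>t. h (t, snd x))" "H2 = (\<lambda>t. k (t, snd x))" for H1 H2
    using o1 assms(2,3) that by (cases x) (auto simp: eventually_nhds intro!: exI[of _ "{t. (t, snd x) \<in> U}"])
  have e2: "eventually (\<lambda>t. H1 t = H2 t) (nhds (snd x))" if "H1 = (\<lambda>t. h (fst x, t))" "H2 = (\<lambda>t. k (fst x, t))" for H1 H2
    using o2 assms(2,3) that by (cases x) (auto simp: eventually_nhds intro!: exI[of _ "{t. (fst x, t) \<in> U}"])
  show "pd1 h x = pd1 k x" unfolding pd1_eq by (rule deriv_cong_ev[OF e1]) auto
  show "pd2 h x = pd2 k x" unfolding pd2_eq by (rule deriv_cong_ev[OF e2]) auto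
qed




definition sm :: "(real \<times> real) set \<Rightarrow> (real \<times> real \<Rightarrow> real) \<Rightarrow> bool" where
  "sm U h \<longleftrightarrow> (\<forall>ds x. x \<in> U \<longrightarrow> foldr pd ds h differentiable (at x))"

lemma pd_local':
  fixes h k :: "real \<times> real \<Rightarrow> real"
  assumes "open U" "x \<in> U" "\<And>y. y \<in> U \<Longrightarrow> h y = k y"
  shows "pd i h x = pd i k x"
  using pd_local[OF assms] by (simp add: pd_def)

lemma foldr_pd_local:
  fixes h k :: "real \<times> real \<Rightarrow> real"
  assumes "open U" "\<And>y. y \<in> U \<Longrightarrow> h y = k y"
  shows "x \<in> U \<Longrightarrow> foldr pd ds h x = foldr pd ds k x"
proof (induction ds arbitrary: x)
  case Nil then show ?case using assms by simp
next
  case (Cons i ds)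
  show ?case using pd_local'[OF assms(1) Cons.prems, of "foldr pd ds h" "foldr pd ds k" i] Cons.IH by simp
qed

lemma differentiable_local:
  fixes h k :: "real \<times> real \<Rightarrow> real"
  assumes "open U" "x \<in> U" "\<And>y. y \<in> U \<Longrightarrow> h y = k y" "h differentiable (at x)"
  shows "k differentiable (at x)"
  using assms has_derivative_transform_within_open unfolding differentiable_def by blast

lemma sm_coind:
  fixes S :: "(real \<times> real \<Rightarrow> real) set"
  assumes "open U"
    and dS: "\<And>h x. h \<in> S \<Longrightarrow> x \<in> U \<Longrightarrow> h differentiable (at x)"
    and pS: "\<And>h i. h \<in> S \<Longrightarrow> \<exists>k\<in>S. \<forall>x\<in>U. pd i h x = k x"
    and "h \<in> S"
  shows "sm U h"
proof -
  have *: "\<forall>h\<in>S. \<exists>k\<in>S. \<forall>x\<in>U. foldr pd ds h x = k x" for ds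
  proof (induction ds rule: rev_induct)
    case Nil then show ?case by auto
  next
    case (snoc i ds)
    show ?case
    proof
      fix h assume "h \<in> S"
      then obtain k' where k': "k' \<in> S" "\<forall>x\<in>U. pd i h x = k' x" using pS by blast
      then obtain k where k: "k \<in> S" "\<forall>x\<in>U. foldr pd ds k' x = k x" using snoc.IH by blast
      have "\<forall>x\<in>U. foldr pd (ds @ [i]) h x = k x"
        using foldr_pd_local[OF assms(1), of "pd i h" k' _ ds] k k' by simp
      then show "\<exists>k\<in>S. \<forall>x\<in>U. foldr pd (ds @ [i]) h x = k x" using k by blast
    qed
  qed
  show ?thesis unfolding sm_def
  proof (intro allI impI)
    fix ds x assume "x \<in> U"
    obtain k where "k \<in> S" "\<forall>x\<in>U. foldr pd ds h x = k x" using * assms(4) by blast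
    then show "foldr pd ds h differentiable (at x)"
      using differentiable_local[OF assms(1) \<open>x \<in> U\<close>, of k "foldr pd ds h"] dS[of k x] \<open>x \<in> U\<close> by simp
  qed
qed

lemma sm_diff: "sm U h \<Longrightarrow> x \<in> U \<Longrightarrow> h differentiable (at x)"
proof -
  assume "sm U h" "x \<in> U"
  then have "foldr pd [] h differentiable (at x)" unfolding sm_def by blast
  then show ?thesis by simp
qed

lemma sm_pd: "sm U h \<Longrightarrow> sm U (pd i h)"
  unfolding sm_def
proof (intro allI impI)
  fix ds x assume "\<forall>ds x. x \<in> U \<longrightarrow> foldr pd ds h differentiable at x" "x \<in> U"
  then have "foldr pd (ds @ [i]) h differentiable (at x)" by blast
  then show "foldr pd ds (pd i h) differentiable (at x)" by simp
qed

lemma sm_local: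
  assumes "open U" "sm U h" "\<And>y. y \<in> U \<Longrightarrow> h y = k y"
  shows "sm U k"
  unfolding sm_def
proof (intro allI impI)
  fix ds x assume x: "x \<in> U"
  have "foldr pd ds h differentiable (at x)" using assms(2) x sm_def by blast
  then show "foldr pd ds k differentiable (at x)"
    using differentiable_local[OF assms(1) x, of "foldr pd ds h"] foldr_pd_local[OF assms(1), of h k _ ds] assms(3) by blast
qed

lemma smooth2_sm: "smooth2 h \<Longrightarrow> sm U h"
  unfolding smooth2_def sm_def by blast

inductive alg :: "(real \<times> real) set \<Rightarrow> (real \<times> real \<Rightarrow> real) \<Rightarrow> bool" for U where
  base: "sm U h \<Longrightarrow> alg U h"
| const: "alg U (\<lambda>x. c)"
| add: "alg U h \<Longrightarrow> alg U k \<Longrightarrow> alg U (\<lambda>x. h x + k x)"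
| mul: "alg U h \<Longrightarrow> alg U k \<Longrightarrow> alg U (\<lambda>x. h x * k x)"
| inv: "alg U h \<Longrightarrow> (\<forall>x\<in>U. h x \<noteq> 0) \<Longrightarrow> alg U (\<lambda>x. inverse (h x))"
| atn: "alg U h \<Longrightarrow> alg U (\<lambda>x. arctan (h x))"
| loc: "alg U h \<Longrightarrow> (\<forall>x\<in>U. h x = k x) \<Longrightarrow> alg U k"

lemma pd_by_deriv:
  fixes H :: "real \<times> real \<Rightarrow> real"
  assumes "(H has_derivative D) (at x)"
  shows "pd i H x = D (if i then (0,1) else (1,0))"
  using pd_from_deriv[OF assms] by (simp add: pd_def)

lemma alg_props:
  assumes "open U" "alg U h"
  shows "(\<forall>x\<in>U. h differentiable (at x)) \<and> (\<forall>i. \<exists>k. alg U k \<and> (\<forall>x\<in>U. pd i h x = k x))"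
  using assms(2)
proof (induction rule: alg.induct)
  case (base h)
  then show ?case using sm_diff sm_pd alg.base by blast
next
  case (const c)
  have "pd i (\<lambda>x. c) x = 0" for i x
    using pd_by_deriv[of "\<lambda>x. c" "\<lambda>_. 0" x i] by simp
  note pd0 = this
  have "\<exists>k. alg U k \<and> (\<forall>x\<in>U. pd i (\<lambda>a. c) x = k x)" for i
    by (rule exI[of _ "\<lambda>x. 0"]) (simp add: alg.const pd0)
  then show ?case by simp
next
  case (add h k)
  have d: "\<forall>x\<in>U. (\<lambda>x. h x + k x) differentiable (at x)" using add.IH by auto
  have "\<exists>ka. alg U ka \<and> (\<forall>x\<in>U. pd i (\<lambda>x. h x + k x) x = ka x)" for i
  proof -
    obtain a where a: "alg U a" "\<forall>x\<in>U. pd i h x = a x" using add.IH by blast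
    obtain b where b: "alg U b" "\<forall>x\<in>U. pd i k x = b x" using add.IH by blast
    have "pd i (\<lambda>x. h x + k x) x = a x + b x" if "x \<in> U" for x
    proof -
      have hd: "(h has_derivative (\<lambda>v. pd1 h x * fst v + pd2 h x * snd v)) (at x)"
        using add.IH that pd_has_derivative by blast
      have kd: "(k has_derivative (\<lambda>v. pd1 k x * fst v + pd2 k x * snd v)) (at x)"
        using add.IH that pd_has_derivative by blast
      have "pd i (\<lambda>x. h x + k x) x = pd i h x + pd i k x"
        using pd_by_deriv[OF has_derivative_add[OF hd kd], of i] pd_by_deriv[OF hd, of i] pd_by_deriv[OF kd, of i]
        by simp
      then show ?thesis using a b that by simp
    qed
    then show ?thesis using alg.add[OF a(1) b(1)] by blast
  qed
  then show ?case using d by blast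
next
  case (mul h k)
  have d: "\<forall>x\<in>U. (\<lambda>x. h x * k x) differentiable (at x)" using mul.IH by auto
  have "\<exists>ka. alg U ka \<and> (\<forall>x\<in>U. pd i (\<lambda>x. h x * k x) x = ka x)" for i
  proof -
    obtain a where a: "alg U a" "\<forall>x\<in>U. pd i h x = a x" using mul.IH by blast
    obtain b where b: "alg U b" "\<forall>x\<in>U. pd i k x = b x" using mul.IH by blast
    have "pd i (\<lambda>x. h x * k x) x = h x * b x + a x * k x" if "x \<in> U" for x
    proof -
      have hd: "(h has_derivative (\<lambda>v. pd1 h x * fst v + pd2 h x * snd v)) (at x)"
        using mul.IH that pd_has_derivative by blast
      have kd: "(k has_derivative (\<lambda>v. pd1 k x * fst v + pd2 k x * snd v)) (at x)"
        using mul.IH that pd_has_derivative by blast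
      have "pd i (\<lambda>x. h x * k x) x = h x * pd i k x + pd i h x * k x"
        using pd_by_deriv[OF has_derivative_mult[OF hd kd], of i] pd_by_deriv[OF hd, of i] pd_by_deriv[OF kd, of i]
        by simp
      then show ?thesis using a b that by simp
    qed
    then show ?thesis using alg.add[OF alg.mul[OF mul.hyps(1) b(1)] alg.mul[OF a(1) mul.hyps(2)]] by blast
  qed
  then show ?case using d by blast
next
  case (inv h)
  have d: "\<forall>x\<in>U. (\<lambda>x. inverse (h x)) differentiable (at x)"
  proof
    fix x assume x: "x \<in> U"
    have hd: "(h has_derivative (\<lambda>v. pd1 h x * fst v + pd2 h x * snd v)) (at x)"
      using inv.IH x pd_has_derivative by blast
    show "(\<lambda>x. inverse (h x)) differentiable (at x)"
      using Deriv.has_derivative_inverse[OF _ hd] inv.hyps(2) x unfolding differentiable_def by blast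
  qed
  have "\<exists>ka. alg U ka \<and> (\<forall>x\<in>U. pd i (\<lambda>x. inverse (h x)) x = ka x)" for i
  proof -
    obtain a where a: "alg U a" "\<forall>x\<in>U. pd i h x = a x" using inv.IH by blast
    have "pd i (\<lambda>x. inverse (h x)) x = ((-1) * inverse (h x)) * a x * inverse (h x)" if "x \<in> U" for x
    proof -
      have hd: "(h has_derivative (\<lambda>v. pd1 h x * fst v + pd2 h x * snd v)) (at x)"
        using inv.IH that pd_has_derivative by blast
      have "pd i (\<lambda>x. inverse (h x)) x = - (inverse (h x) * pd i h x * inverse (h x))"
        using pd_by_deriv[OF Deriv.has_derivative_inverse[OF _ hd], of i] pd_by_deriv[OF hd, of i] inv.hyps(2) that
        by simp
      then show ?thesis using a that by simp
    qed
    moreover have "alg U (\<lambda>x. ((-1) * inverse (h x)) * a x * inverse (h x))"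
      using alg.mul[OF alg.mul[OF alg.mul[OF alg.const alg.inv[OF inv.hyps]] a(1)] alg.inv[OF inv.hyps]] .
    ultimately show ?thesis by blast
  qed
  then show ?case using d by blast
next
  case (atn h)
  have d: "\<forall>x\<in>U. (\<lambda>x. arctan (h x)) differentiable (at x)"
  proof
    fix x assume x: "x \<in> U"
    have hd: "(h has_derivative (\<lambda>v. pd1 h x * fst v + pd2 h x * snd v)) (at x)"
      using atn.IH x pd_has_derivative by blast
    show "(\<lambda>x. arctan (h x)) differentiable (at x)"
      using DERIV_compose_FDERIV[OF DERIV_arctan hd] unfolding differentiable_def by blast
  qed
  have "\<exists>ka. alg U ka \<and> (\<forall>x\<in>U. pd i (\<lambda>x. arctan (h x)) x = ka x)" for i
  proof -
    obtain a where a: "alg U a" "\<forall>x\<in>U. pd i h x = a x" using atn.IH by blast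
    have "pd i (\<lambda>x. arctan (h x)) x = a x * inverse (1 + h x * h x)" if "x \<in> U" for x
    proof -
      have hd: "(h has_derivative (\<lambda>v. pd1 h x * fst v + pd2 h x * snd v)) (at x)"
        using atn.IH that pd_has_derivative by blast
      have "pd i (\<lambda>x. arctan (h x)) x = pd i h x * inverse (1 + (h x)\<^sup>2)"
        using pd_by_deriv[OF DERIV_compose_FDERIV[OF DERIV_arctan hd], of i] pd_by_deriv[OF hd, of i]
        by simp
      then show ?thesis using a that by (simp add: power2_eq_square)
    qed
    moreover have "alg U (\<lambda>x. a x * inverse (1 + h x * h x))"
    proof (rule alg.mul[OF a(1) alg.inv])
      show "alg U (\<lambda>x. 1 + h x * h x)" by (intro alg.add alg.mul alg.const atn.hyps)
      show "\<forall>x\<in>U. 1 + h x * h x \<noteq> 0"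
      proof
        fix x show "1 + h x * h x \<noteq> 0" using zero_le_square[of "h x"] by linarith
      qed
    qed
    ultimately show ?thesis by blast
  qed
  then show ?case using d by blast
next
  case (loc h k)
  have d: "\<forall>x\<in>U. k differentiable (at x)"
    using differentiable_local[OF assms(1), of _ h k] loc.IH loc.hyps(2) by blast
  have "\<exists>ka. alg U ka \<and> (\<forall>x\<in>U. pd i k x = ka x)" for i
  proof -
    obtain a where a: "alg U a" "\<forall>x\<in>U. pd i h x = a x" using loc.IH by blast
    have "\<forall>x\<in>U. pd i k x = a x" using a pd_local'[OF assms(1), of _ h k i] loc.hyps(2) by auto
    then show ?thesis using a by blast
  qed
  then show ?case using d by blast
qed

lemma alg_sm: "open U \<Longrightarrow> alg U h \<Longrightarrow> sm U h"
  by (rule sm_coind[of U "{h. alg U h}"]) (use alg_props in auto)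




lemma sm_affine0: "sm UNIV (\<lambda>x. a * fst x + b * snd x + c)"
proof (rule sm_coind[of UNIV "{h. \<exists>a b c::real. h = (\<lambda>x::real\<times>real. a * fst x + b * snd x + c)}"])
  show "h differentiable (at x)" if hS: "h \<in> {h. \<exists>a b c::real. h = (\<lambda>x::real\<times>real. a * fst x + b * snd x + c)}" for h x
  proof -
    obtain a b c where h: "h = (\<lambda>x. a * fst x + b * snd x + c)" using hS by blast
    have "(h has_derivative (\<lambda>v. a * fst v + b * snd v)) (at x)"
      unfolding h by (auto intro!: derivative_eq_intros)
    then show ?thesis unfolding differentiable_def by blast
  qed
  show "\<exists>k\<in>{h. \<exists>a b c::real. h = (\<lambda>x::real\<times>real. a * fst x + b * snd x + c)}. \<forall>x\<in>UNIV. pd i h x = k x"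
    if hS: "h \<in> {h. \<exists>a b c::real. h = (\<lambda>x::real\<times>real. a * fst x + b * snd x + c)}" for h i
  proof -
    obtain a b c where h: "h = (\<lambda>x. a * fst x + b * snd x + c)" using hS by blast
    have "(h has_derivative (\<lambda>v. a * fst v + b * snd v)) (at x)" for x
      unfolding h by (auto intro!: derivative_eq_intros)
    from pd_by_deriv[OF this, where i=i] have "pd i h x = (if i then b else a)" for x by simp
    moreover have "\<exists>a' b' c'::real. (\<lambda>x::real\<times>real. 0 * fst x + 0 * snd x + (if i then b else a)) = (\<lambda>x. a' * fst x + b' * snd x + c')"
      by blast
    ultimately show ?thesis by (intro bexI[of _ "\<lambda>x. 0 * fst x + 0 * snd x + (if i then b else a)"]) (simp_all only: mem_Collect_eq, simp)
  qed
qed auto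

lemma sm_mono: "sm UNIV h \<Longrightarrow> sm U h" unfolding sm_def by blast

lemma sm_affine: "sm U (\<lambda>x. a * fst x + b * snd x + c)"
  by (rule sm_mono[OF sm_affine0])

lemma sm_fst: "sm U fst" using sm_affine[of U 1 0 0] by simp
lemma sm_snd: "sm U snd" using sm_affine[of U 0 1 0] by simp

lemma comp_curve_deriv:
  fixes K :: "real \<times> real \<Rightarrow> real" and \<gamma> :: "real \<Rightarrow> real \<times> real"
  assumes "K differentiable (at (\<gamma> t))" "(\<gamma> has_vector_derivative w) (at t)"
  shows "((\<lambda>s. K (\<gamma> s)) has_field_derivative (pd1 K (\<gamma> t) * fst w + pd2 K (\<gamma> t) * snd w)) (at t)"
proof -
  have g: "(\<gamma> has_derivative (\<lambda>s. s *\<^sub>R w)) (at t)" using assms(2) by (simp add: has_vector_derivative_def)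
  have "((\<lambda>s. K (\<gamma> s)) has_derivative (\<lambda>s. pd1 K (\<gamma> t) * fst (s *\<^sub>R w) + pd2 K (\<gamma> t) * snd (s *\<^sub>R w))) (at t)"
    using has_derivative_compose[OF g pd_has_derivative[OF assms(1)]] by (simp add: o_def)
  moreover have "(\<lambda>s. pd1 K (\<gamma> t) * fst (s *\<^sub>R w) + pd2 K (\<gamma> t) * snd (s *\<^sub>R w))
      = (\<lambda>s. s * (pd1 K (\<gamma> t) * fst w + pd2 K (\<gamma> t) * snd w))"
    by (auto simp: algebra_simps)
  ultimately show ?thesis by (simp add: has_field_derivative_def mult_commute_abs)
qed

lemma curve_smooth:
  fixes \<gamma> :: "real \<Rightarrow> real \<times> real"
  assumes U: "open U" and I: "open I"
    and g: "\<And>t. t \<in> I \<Longrightarrow> \<gamma> t \<in> U \<and> (\<gamma> has_vector_derivative (W1 (\<gamma> t), W2 (\<gamma> t))) (at t)"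
    and W: "sm U W1" "sm U W2" and H: "sm U H"
  shows "smooth1_on I (H \<circ> \<gamma>)"
proof -
  have key: "\<forall>H. sm U H \<longrightarrow> (\<exists>K. sm U K \<and> (\<forall>t\<in>I. (deriv ^^ n) (H \<circ> \<gamma>) t = K (\<gamma> t)))" for n
  proof (induction n)
    case 0 then show ?case by auto
  next
    case (Suc n)
    show ?case
    proof (intro allI impI)
      fix H assume "sm U H"
      then obtain K where K: "sm U K" "\<forall>t\<in>I. (deriv ^^ n) (H \<circ> \<gamma>) t = K (\<gamma> t)" using Suc.IH by blast
      define K' where "K' = (\<lambda>x. pd1 K x * W1 x + pd2 K x * W2 x)"
      have "alg U K'" unfolding K'_def
        using sm_pd[OF K(1), of False] sm_pd[OF K(1), of True] W
        by (intro alg.add alg.mul alg.base) (auto simp: pd_def)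
      then have smK': "sm U K'" using alg_sm U by blast
      have "(deriv ^^ Suc n) (H \<circ> \<gamma>) t = K' (\<gamma> t)" if t: "t \<in> I" for t
      proof -
        have ev: "eventually (\<lambda>s. (deriv ^^ n) (H \<circ> \<gamma>) s = K (\<gamma> s)) (nhds t)"
          using K(2) I t eventually_nhds by blast
        have "(deriv ^^ Suc n) (H \<circ> \<gamma>) t = deriv (\<lambda>s. K (\<gamma> s)) t"
          using deriv_cong_ev[OF ev refl] by simp
        also have "\<dots> = K' (\<gamma> t)"
          using comp_curve_deriv[OF sm_diff[OF K(1)] conjunct2[OF g[OF t]]] g[OF t] unfolding K'_def
          by (simp add: DERIV_imp_deriv)
        finally show ?thesis .
      qed
      then show "\<exists>K. sm U K \<and> (\<forall>t\<in>I. (deriv ^^ Suc n) (H \<circ> \<gamma>) t = K (\<gamma> t))"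
        using smK' by blast
    qed
  qed
  show ?thesis unfolding smooth1_on_def
  proof (intro allI ballI)
    fix n t assume t: "t \<in> I"
    obtain K where K: "sm U K" "\<forall>t\<in>I. (deriv ^^ n) (H \<circ> \<gamma>) t = K (\<gamma> t)" using key H by blast
    have "((\<lambda>s. K (\<gamma> s)) has_field_derivative (pd1 K (\<gamma> t) * W1 (\<gamma> t) + pd2 K (\<gamma> t) * W2 (\<gamma> t))) (at t)"
      using comp_curve_deriv[OF sm_diff[OF K(1)] conjunct2[OF g[OF t]]] g[OF t] by simp
    then have "((deriv ^^ n) (H \<circ> \<gamma>) has_field_derivative (pd1 K (\<gamma> t) * W1 (\<gamma> t) + pd2 K (\<gamma> t) * W2 (\<gamma> t))) (at t)"
      by (rule has_field_derivative_transform_within_open[OF _ I t]) (use K in auto)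
    then show "(deriv ^^ n) (H \<circ> \<gamma>) field_differentiable (at t)"
      unfolding field_differentiable_def by blast
  qed
qed




lemma alg_diff: "alg U h \<Longrightarrow> alg U k \<Longrightarrow> alg U (\<lambda>x. h x - k x)"
proof -
  assume "alg U h" "alg U k"
  then have "alg U (\<lambda>x. h x + (-1) * k x)" by (intro alg.add alg.mul alg.const)
  then show ?thesis by (rule alg.loc) simp
qed

lemma alg_pow2: "alg U h \<Longrightarrow> alg U (\<lambda>x. (h x)\<^sup>2)"
proof -
  assume "alg U h"
  then have "alg U (\<lambda>x. h x * h x)" by (intro alg.mul)
  then show ?thesis by (rule alg.loc) (simp add: power2_eq_square)
qed

lemma sm_pd1: "sm U h \<Longrightarrow> sm U (pd1 h)" using sm_pd[of U h False] by (simp add: pd_def)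
lemma sm_pd2: "sm U h \<Longrightarrow> sm U (pd2 h)" using sm_pd[of U h True] by (simp add: pd_def)

locale twofun =
  fixes f1 f2 :: "real \<times> real \<Rightarrow> real"
  assumes s1: "smooth2 f1" and s2: "smooth2 f2"
begin

definition "gg = (\<lambda>x. (f1 x)\<^sup>2 + (f2 x)\<^sup>2)"
definition "JJ = jac f1 f2"
definition "QQ = (\<lambda>x. f1 x * jac f1 JJ x + f2 x * jac f2 JJ x)"

lemma sm_f1: "sm U f1" using s1 smooth2_sm by blast
lemma sm_f2: "sm U f2" using s2 smooth2_sm by blast

lemma sm_gg: "sm UNIV gg"
proof -
  have "alg UNIV (\<lambda>x. (f1 x)\<^sup>2 + (f2 x)\<^sup>2)"
    by (rule alg.add; rule alg_pow2; rule alg.base; rule sm_f1 sm_f2)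
  then show ?thesis unfolding gg_def by (intro alg_sm) auto
qed

lemma sm_JJ: "sm UNIV JJ"
proof -
  have "alg UNIV (\<lambda>x. pd1 f1 x * pd2 f2 x - pd2 f1 x * pd1 f2 x)"
    by (rule alg_diff; rule alg.mul; rule alg.base; rule sm_pd1 sm_pd2; rule sm_f1 sm_f2)
  then show ?thesis unfolding JJ_def jac_def by (intro alg_sm) auto
qed

lemma diff_f1: "f1 differentiable (at x)" using sm_diff[OF sm_f1] by blast
lemma diff_f2: "f2 differentiable (at x)" using sm_diff[OF sm_f2] by blast
lemma diff_gg: "gg differentiable (at x)" using sm_diff[OF sm_gg] by blast
lemma diff_JJ: "JJ differentiable (at x)" using sm_diff[OF sm_JJ] by blast
lemma diff_pd1gg: "pd1 gg differentiable (at x)" using sm_diff[OF sm_pd1[OF sm_gg]] by blast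
lemma diff_pd2gg: "pd2 gg differentiable (at x)" using sm_diff[OF sm_pd2[OF sm_gg]] by blast

lemma pd_gg:
  "pd1 gg x = 2 * (f1 x * pd1 f1 x + f2 x * pd1 f2 x)"
  "pd2 gg x = 2 * (f1 x * pd2 f1 x + f2 x * pd2 f2 x)"
proof -
  have "(gg has_derivative (\<lambda>v. 2 * f1 x * (pd1 f1 x * fst v + pd2 f1 x * snd v) + 2 * f2 x * (pd1 f2 x * fst v + pd2 f2 x * snd v))) (at x)"
    unfolding gg_def using pd_has_derivative[OF diff_f1, of x] pd_has_derivative[OF diff_f2, of x]
    by (auto intro!: derivative_eq_intros ext simp: algebra_simps)
  from pd_from_deriv[OF this] show
    "pd1 gg x = 2 * (f1 x * pd1 f1 x + f2 x * pd1 f2 x)"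
    "pd2 gg x = 2 * (f1 x * pd2 f1 x + f2 x * pd2 f2 x)" by (simp_all add: algebra_simps)
qed

lemma df1_T: "pd1 f1 x * (- pd2 gg x) + pd2 f1 x * pd1 gg x = - 2 * f2 x * JJ x"
  unfolding pd_gg JJ_def jac_def by (simp add: algebra_simps)
lemma df2_T: "pd1 f2 x * (- pd2 gg x) + pd2 f2 x * pd1 gg x = 2 * f1 x * JJ x"
  unfolding pd_gg JJ_def jac_def by (simp add: algebra_simps)
lemma dJ_T: "pd1 JJ x * (- pd2 gg x) + pd2 JJ x * pd1 gg x = 2 * QQ x"
  unfolding pd_gg QQ_def jac_def by (simp only: ring_distribs) (simp add: algebra_simps)

end



context twofun begin

lemma theta_deriv:
  fixes \<gamma> :: "real \<Rightarrow> real \<times> real" and c \<theta> :: "real \<Rightarrow> real" and \<delta> :: real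
  assumes dpos: "\<delta> > 0" and I: "open I"
    and g: "\<And>t. t \<in> I \<Longrightarrow> (\<gamma> has_vector_derivative c t *\<^sub>R (- pd2 gg (\<gamma> t), pd1 gg (\<gamma> t))) (at t)"
    and th: "\<And>t. t \<in> I \<Longrightarrow> \<theta> field_differentiable (at t)"
    and f: "\<And>t. t \<in> I \<Longrightarrow> f1 (\<gamma> t) = \<delta> * cos (\<theta> t) \<and> f2 (\<gamma> t) = \<delta> * sin (\<theta> t)"
    and t: "t \<in> I"
  shows "deriv \<theta> t = 2 * c t * JJ (\<gamma> t)"
proof -
  obtain th' where th': "(\<theta> has_field_derivative th') (at t)"
    using th[OF t] field_differentiable_def by blast
  define y where "y = \<gamma> t"
  define w where "w = c t *\<^sub>R (- pd2 gg y, pd1 gg y)"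
  have gw: "(\<gamma> has_vector_derivative w) (at t)" using g[OF t] by (simp add: w_def y_def)
  have eq1: "pd1 f1 y * fst w + pd2 f1 y * snd w = c t * (- 2 * f2 y * JJ y)"
  proof -
    have "pd1 f1 y * fst w + pd2 f1 y * snd w = c t * (pd1 f1 y * (- pd2 gg y) + pd2 f1 y * pd1 gg y)"
      by (simp add: w_def algebra_simps)
    then show ?thesis using df1_T[of y] by simp
  qed
  have eq2: "pd1 f2 y * fst w + pd2 f2 y * snd w = c t * (2 * f1 y * JJ y)"
  proof -
    have "pd1 f2 y * fst w + pd2 f2 y * snd w = c t * (pd1 f2 y * (- pd2 gg y) + pd2 f2 y * pd1 gg y)"
      by (simp add: w_def algebra_simps)
    then show ?thesis using df2_T[of y] by simp
  qed
  have d1: "((\<lambda>s. f1 (\<gamma> s)) has_field_derivative (c t * (- 2 * f2 y * JJ y))) (at t)"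
    using comp_curve_deriv[OF diff_f1 gw] eq1 by (simp add: y_def)
  have d2: "((\<lambda>s. f2 (\<gamma> s)) has_field_derivative (c t * (2 * f1 y * JJ y))) (at t)"
    using comp_curve_deriv[OF diff_f2 gw] eq2 by (simp add: y_def)
  have e1: "((\<lambda>s. \<delta> * cos (\<theta> s)) has_field_derivative (\<delta> * (- sin (\<theta> t) * th'))) (at t)"
    by (auto intro!: derivative_eq_intros th')
  have e2: "((\<lambda>s. \<delta> * sin (\<theta> s)) has_field_derivative (\<delta> * (cos (\<theta> t) * th'))) (at t)"
    by (auto intro!: derivative_eq_intros th')
  have e1': "((\<lambda>s. f1 (\<gamma> s)) has_field_derivative (\<delta> * (- sin (\<theta> t) * th'))) (at t)"
    by (rule has_field_derivative_transform_within_open[OF e1 I t]) (use f in auto)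
  have e2': "((\<lambda>s. f2 (\<gamma> s)) has_field_derivative (\<delta> * (cos (\<theta> t) * th'))) (at t)"
    by (rule has_field_derivative_transform_within_open[OF e2 I t]) (use f in auto)
  have A: "\<delta> * (- sin (\<theta> t) * th') = c t * (- 2 * f2 y * JJ y)" using DERIV_unique[OF e1' d1] .
  have B: "\<delta> * (cos (\<theta> t) * th') = c t * (2 * f1 y * JJ y)" using DERIV_unique[OF e2' d2] .
  have fy: "f1 y = \<delta> * cos (\<theta> t)" "f2 y = \<delta> * sin (\<theta> t)" using f[OF t] by (auto simp: y_def)
  have A': "\<delta> * (sin (\<theta> t) * th') = \<delta> * (sin (\<theta> t) * (2 * c t * JJ y))" using A fy by (simp add: algebra_simps)
  have B': "\<delta> * (cos (\<theta> t) * th') = \<delta> * (cos (\<theta> t) * (2 * c t * JJ y))" using B fy by (simp add: algebra_simps)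
  have A'': "sin (\<theta> t) * th' = sin (\<theta> t) * (2 * c t * JJ y)" using A' dpos by simp
  have B'': "cos (\<theta> t) * th' = cos (\<theta> t) * (2 * c t * JJ y)" using B' dpos by simp
  have "th' = (sin (\<theta> t))\<^sup>2 * th' + (cos (\<theta> t))\<^sup>2 * th'"
    by (simp add: distrib_right[symmetric])
  also have "\<dots> = sin (\<theta> t) * (sin (\<theta> t) * th') + cos (\<theta> t) * (cos (\<theta> t) * th')"
    by (simp add: power2_eq_square)
  also have "\<dots> = sin (\<theta> t) * (sin (\<theta> t) * (2 * c t * JJ y)) + cos (\<theta> t) * (cos (\<theta> t) * (2 * c t * JJ y))"
    unfolding A'' B'' ..
  also have "\<dots> = 2 * c t * JJ y" using sin_cos_squared_add3[of "\<theta> t"] by algebra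
  finally have "th' = 2 * c t * JJ y" .
  then show ?thesis using DERIV_imp_deriv[OF th'] by (simp add: y_def)
qed

lemma theta_deriv2:
  fixes \<gamma> :: "real \<Rightarrow> real \<times> real" and c \<theta> :: "real \<Rightarrow> real" and \<delta> :: real
  assumes dpos: "\<delta> > 0" and I: "open I"
    and g: "\<And>t. t \<in> I \<Longrightarrow> (\<gamma> has_vector_derivative c t *\<^sub>R (- pd2 gg (\<gamma> t), pd1 gg (\<gamma> t))) (at t)"
    and th: "\<And>t. t \<in> I \<Longrightarrow> \<theta> field_differentiable (at t)"
    and f: "\<And>t. t \<in> I \<Longrightarrow> f1 (\<gamma> t) = \<delta> * cos (\<theta> t) \<and> f2 (\<gamma> t) = \<delta> * sin (\<theta> t)"
    and I0: "0 \<in> I"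
    and c: "(c has_real_derivative c') (at 0)"
  shows "(deriv \<theta> has_real_derivative (2 * c' * JJ (\<gamma> 0) + 4 * (c 0)\<^sup>2 * QQ (\<gamma> 0))) (at 0)"
proof -
  define y where "y = \<gamma> 0"
  define w where "w = c 0 *\<^sub>R (- pd2 gg y, pd1 gg y)"
  have gw: "(\<gamma> has_vector_derivative w) (at 0)" using g[OF I0] by (simp add: w_def y_def)
  have eq: "pd1 JJ y * fst w + pd2 JJ y * snd w = c 0 * (2 * QQ y)"
  proof -
    have "pd1 JJ y * fst w + pd2 JJ y * snd w = c 0 * (pd1 JJ y * (- pd2 gg y) + pd2 JJ y * pd1 gg y)"
      by (simp add: w_def algebra_simps)
    then show ?thesis using dJ_T[of y] by simp
  qed
  have dJ: "((\<lambda>s. JJ (\<gamma> s)) has_field_derivative (c 0 * (2 * QQ y))) (at 0)"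
    using comp_curve_deriv[OF diff_JJ gw] eq by (simp add: y_def)
  have "((\<lambda>s. 2 * c s * JJ (\<gamma> s)) has_field_derivative (2 * c' * JJ (\<gamma> 0) + 2 * c 0 * (c 0 * (2 * QQ y)))) (at 0)"
    by (auto intro!: derivative_eq_intros c dJ simp: y_def)
  then have "((\<lambda>s. 2 * c s * JJ (\<gamma> s)) has_field_derivative (2 * c' * JJ (\<gamma> 0) + 4 * (c 0)\<^sup>2 * QQ (\<gamma> 0))) (at 0)"
    by (simp add: y_def power2_eq_square algebra_simps)
  then show ?thesis
    by (rule has_field_derivative_transform_within_open[OF _ I I0])
       (use theta_deriv[OF dpos I g th f] in auto)
qed

end



context twofun begin

lemma curve_data:
  fixes \<gamma> :: "real \<Rightarrow> real \<times> real" and \<delta> \<epsilon> :: real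
  assumes I: "open I" and I0: "0 \<in> I"
    and P: "\<And>t. t \<in> I \<Longrightarrow> gg (\<gamma> t) = \<delta>\<^sup>2"
    and reg: "\<And>x. gg x = \<delta>\<^sup>2 \<Longrightarrow> (pd1 gg x, pd2 gg x) \<noteq> (0,0)"
    and s1: "smooth1_on I (fst \<circ> \<gamma>)" and s2: "smooth1_on I (snd \<circ> \<gamma>)"
  shows "\<exists>c. (\<forall>t\<in>I. (\<gamma> has_vector_derivative c t *\<^sub>R (- pd2 gg (\<gamma> t), pd1 gg (\<gamma> t))) (at t))
             \<and> c field_differentiable (at 0)
             \<and> (\<gamma> has_vector_derivative c 0 *\<^sub>R (- pd2 gg (\<gamma> 0), pd1 gg (\<gamma> 0))) (at 0)"
proof -
  define d1 where "d1 = deriv (fst \<circ> \<gamma>)"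
  define d2 where "d2 = deriv (snd \<circ> \<gamma>)"
  define N where "N = (\<lambda>x. (pd1 gg x)\<^sup>2 + (pd2 gg x)\<^sup>2)"
  define c where "c = (\<lambda>t. (d1 t * (- pd2 gg (\<gamma> t)) + d2 t * pd1 gg (\<gamma> t)) / N (\<gamma> t))"
  have Npos: "N (\<gamma> t) \<noteq> 0" if "t \<in> I" for t
  proof -
    have "(pd1 gg (\<gamma> t), pd2 gg (\<gamma> t)) \<noteq> (0,0)" using reg P that by blast
    then show ?thesis unfolding N_def by (simp add: sum_power2_eq_zero_iff)
  qed
  have vd: "(\<gamma> has_vector_derivative (d1 t, d2 t)) (at t)" if t: "t \<in> I" for t
  proof -
    have "(fst \<circ> \<gamma>) field_differentiable (at t)" using s1 t unfolding smooth1_on_def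
      by (metis funpow_0)
    then have a: "((fst \<circ> \<gamma>) has_vector_derivative d1 t) (at t)"
      unfolding d1_def by (simp add: DERIV_deriv_iff_field_differentiable has_real_derivative_iff_has_vector_derivative[symmetric])
    have "(snd \<circ> \<gamma>) field_differentiable (at t)" using s2 t unfolding smooth1_on_def
      by (metis funpow_0)
    then have b: "((snd \<circ> \<gamma>) has_vector_derivative d2 t) (at t)"
      unfolding d2_def by (simp add: DERIV_deriv_iff_field_differentiable has_real_derivative_iff_has_vector_derivative[symmetric])
    have "((\<lambda>s. (fst (\<gamma> s), snd (\<gamma> s))) has_vector_derivative (d1 t, d2 t)) (at t)"
      using has_vector_derivative_Pair[OF a b] by (simp add: o_def)
    then show ?thesis by simp
  qed
  have orth: "pd1 gg (\<gamma> t) * d1 t + pd2 gg (\<gamma> t) * d2 t = 0" if t: "t \<in> I" for t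
  proof -
    have a: "((\<lambda>s. gg (\<gamma> s)) has_field_derivative (pd1 gg (\<gamma> t) * d1 t + pd2 gg (\<gamma> t) * d2 t)) (at t)"
      using comp_curve_deriv[OF diff_gg vd[OF t]] by simp
    have "((\<lambda>s. \<delta>\<^sup>2) has_field_derivative 0) (at t)" by simp
    then have b: "((\<lambda>s. gg (\<gamma> s)) has_field_derivative 0) (at t)"
      by (rule has_field_derivative_transform_within_open[OF _ I t]) (use P in auto)
    show ?thesis using DERIV_unique[OF a b] .
  qed
  have eqv: "(d1 t, d2 t) = c t *\<^sub>R (- pd2 gg (\<gamma> t), pd1 gg (\<gamma> t))" if t: "t \<in> I" for t
  proof -
    have n: "N (\<gamma> t) \<noteq> 0" using Npos t .
    have o: "pd1 gg (\<gamma> t) * d1 t + pd2 gg (\<gamma> t) * d2 t = 0" using orth t .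
    have "d1 t = c t * (- pd2 gg (\<gamma> t))" unfolding c_def using n o unfolding N_def
      by (simp add: field_simps power2_eq_square) algebra
    moreover have "d2 t = c t * pd1 gg (\<gamma> t)" unfolding c_def using n o unfolding N_def
      by (simp add: field_simps power2_eq_square) algebra
    ultimately show ?thesis by simp
  qed
  have cd: "c field_differentiable (at 0)"
  proof -
    have "d1 field_differentiable (at 0)" using s1 I0 unfolding smooth1_on_def d1_def
      by (metis One_nat_def funpow_0 funpow_Suc_right o_apply)
    moreover have "d2 field_differentiable (at 0)" using s2 I0 unfolding smooth1_on_def d2_def
      by (metis One_nat_def funpow_0 funpow_Suc_right o_apply)
    moreover have "(\<lambda>s. pd1 gg (\<gamma> s)) field_differentiable (at 0)"
      using comp_curve_deriv[OF diff_pd1gg vd[OF I0]] field_differentiable_def by blast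
    moreover have "(\<lambda>s. pd2 gg (\<gamma> s)) field_differentiable (at 0)"
      using comp_curve_deriv[OF diff_pd2gg vd[OF I0]] field_differentiable_def by blast
    ultimately show ?thesis unfolding c_def N_def using Npos[OF I0] unfolding N_def
      by (intro field_differentiable_divide field_differentiable_add field_differentiable_mult
          field_differentiable_minus field_differentiable_power) auto
  qed
  show ?thesis using vd eqv cd I0 by (intro exI[of _ c]) auto
qed

end



lemma crit_alg:
  fixes a1 a2 b1 b2 v1 v2 F1 F2 g1 g2 :: real
  assumes g: "g1 = 2*(F1*a1+F2*b1)" "g2 = 2*(F1*a2+F2*b2)" and J: "a1*b2 - a2*b1 = 0"
    and o: "g1* v1+g2* v2=0" and n: "(g1,g2) \<noteq> (0,0)"
  shows "a1* v1+a2* v2 = 0 \<and> b1* v1+b2* v2 = 0"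
proof -
  have 1: "(a1* v1+a2* v2)*g1 = 0" "(a1* v1+a2* v2)*g2 = 0" using g J o by algebra+
  have 2: "(b1* v1+b2* v2)*g1 = 0" "(b1* v1+b2* v2)*g2 = 0" using g J o by algebra+
  show ?thesis using 1 2 n by auto
qed

context twofun begin

lemma smooth1_diff: "smooth1_on I h \<Longrightarrow> t \<in> I \<Longrightarrow> h field_differentiable (at t)"
  unfolding smooth1_on_def by (metis funpow_0)

lemma part1:
  fixes x :: "real \<Rightarrow> real \<times> real" and \<theta> :: "real \<Rightarrow> real" and \<delta> \<epsilon> :: real
  assumes dpos: "\<delta> > 0" and e: "\<epsilon> > 0"
    and xd: "\<And>t. t \<in> {-\<epsilon><..<\<epsilon>} \<Longrightarrow> (x has_vector_derivative (- pd2 gg (x t), pd1 gg (x t))) (at t)"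
    and th: "smooth1_on {-\<epsilon><..<\<epsilon>} \<theta>"
    and f: "\<And>t. t \<in> {-\<epsilon><..<\<epsilon>} \<Longrightarrow> f1 (x t) = \<delta> * cos (\<theta> t) \<and> f2 (x t) = \<delta> * sin (\<theta> t)"
  shows "deriv (deriv \<theta>) 0 = 4 * QQ (x 0)"
proof -
  have "(deriv \<theta> has_real_derivative (2 * 0 * JJ (x 0) + 4 * ((\<lambda>_. 1::real) 0)\<^sup>2 * QQ (x 0))) (at 0)"
  proof (rule theta_deriv2[OF dpos, of "{-\<epsilon><..<\<epsilon>}" x "\<lambda>_. 1"])
    show "(x has_vector_derivative 1 *\<^sub>R (- pd2 gg (x t), pd1 gg (x t))) (at t)" if "t \<in> {-\<epsilon><..<\<epsilon>}" for t
      using xd[OF that] by simp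
    show "\<theta> field_differentiable (at t)" if "t \<in> {-\<epsilon><..<\<epsilon>}" for t using smooth1_diff[OF th that] .
  qed (use e f in auto)
  then show ?thesis by (simp add: DERIV_imp_deriv)
qed

lemma partM:
  fixes \<gamma> :: "real \<Rightarrow> real \<times> real" and \<theta> :: "real \<Rightarrow> real" and \<delta> \<epsilon> :: real
  assumes dpos: "\<delta> > 0" and e: "\<epsilon> > 0"
    and P: "\<And>t. t \<in> {-\<epsilon><..<\<epsilon>} \<Longrightarrow> gg (\<gamma> t) = \<delta>\<^sup>2"
    and reg: "\<And>x. gg x = \<delta>\<^sup>2 \<Longrightarrow> (pd1 gg x, pd2 gg x) \<noteq> (0,0)"
    and s1: "smooth1_on {-\<epsilon><..<\<epsilon>} (fst \<circ> \<gamma>)" and s2: "smooth1_on {-\<epsilon><..<\<epsilon>} (snd \<circ> \<gamma>)"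
    and gd: "(\<gamma> has_vector_derivative \<gamma>') (at 0)" and gn: "\<gamma>' \<noteq> 0"
    and th: "smooth1_on {-\<epsilon><..<\<epsilon>} \<theta>"
    and f: "\<And>t. t \<in> {-\<epsilon><..<\<epsilon>} \<Longrightarrow> f1 (\<gamma> t) = \<delta> * cos (\<theta> t) \<and> f2 (\<gamma> t) = \<delta> * sin (\<theta> t)"
    and J0: "JJ (\<gamma> 0) = 0"
  shows "\<exists>k>0. deriv (deriv \<theta>) 0 = k * QQ (\<gamma> 0)"
proof -
  have I: "open {-\<epsilon><..<\<epsilon>}" by simp
  have I0: "0 \<in> {-\<epsilon><..<\<epsilon>}" using e by simp
  obtain c where c: "\<forall>t\<in>{-\<epsilon><..<\<epsilon>}. (\<gamma> has_vector_derivative c t *\<^sub>R (- pd2 gg (\<gamma> t), pd1 gg (\<gamma> t))) (at t)"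
    "c field_differentiable (at 0)"
    "(\<gamma> has_vector_derivative c 0 *\<^sub>R (- pd2 gg (\<gamma> 0), pd1 gg (\<gamma> 0))) (at 0)"
    using curve_data[OF I I0 P reg s1 s2] by blast
  obtain c' where c': "(c has_real_derivative c') (at 0)" using c(2) field_differentiable_def by blast
  have "(deriv \<theta> has_real_derivative (2 * c' * JJ (\<gamma> 0) + 4 * (c 0)\<^sup>2 * QQ (\<gamma> 0))) (at 0)"
    by (rule theta_deriv2[OF dpos I _ _ _ I0 c']) (use c(1) smooth1_diff[OF th] f in auto)
  then have d: "deriv (deriv \<theta>) 0 = 4 * (c 0)\<^sup>2 * QQ (\<gamma> 0)" using J0 by (simp add: DERIV_imp_deriv)
  have "\<gamma>' = c 0 *\<^sub>R (- pd2 gg (\<gamma> 0), pd1 gg (\<gamma> 0))" using vector_derivative_unique_at[OF gd c(3)] .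
  then have "c 0 \<noteq> 0" using gn by (auto simp: zero_prod_def)
  then have "4 * (c 0)\<^sup>2 > 0" by simp
  then show ?thesis using d by blast
qed

lemma crit_iff:
  fixes \<delta> :: real and p :: "real \<times> real"
  assumes dpos: "\<delta> > 0" and p: "gg p = \<delta>\<^sup>2" and reg: "(pd1 gg p, pd2 gg p) \<noteq> (0,0)"
  shows "crit_restr f1 f2 gg (\<delta>\<^sup>2) p \<longleftrightarrow> JJ p = 0"
proof
  assume cr: "crit_restr f1 f2 gg (\<delta>\<^sup>2) p"
  have "dir gg p (- pd2 gg p, pd1 gg p) = 0" unfolding dir_def by simp
  then have "dir f1 p (- pd2 gg p, pd1 gg p) = 0 \<and> dir f2 p (- pd2 gg p, pd1 gg p) = 0"
    using cr unfolding crit_restr_def by blast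
  then have "f2 p * JJ p = 0" "f1 p * JJ p = 0" using df1_T[of p] df2_T[of p] unfolding dir_def by auto
  moreover have "f1 p \<noteq> 0 \<or> f2 p \<noteq> 0" using p dpos unfolding gg_def by auto
  ultimately show "JJ p = 0" by auto
next
  assume J: "JJ p = 0"
  show "crit_restr f1 f2 gg (\<delta>\<^sup>2) p" unfolding crit_restr_def
  proof (intro conjI)
    show "gg p = \<delta>\<^sup>2" by (rule p)
    show "\<forall>v. dir gg p v = 0 \<longrightarrow> dir f1 p v = 0 \<and> dir f2 p v = 0"
    proof (intro allI impI)
    fix v assume "dir gg p v = 0"
    then have o: "pd1 gg p * fst v + pd2 gg p * snd v = 0" unfolding dir_def .
    have "pd1 f1 p * fst v + pd2 f1 p * snd v = 0 \<and> pd1 f2 p * fst v + pd2 f2 p * snd v = 0"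
      by (rule crit_alg[OF pd_gg(1) pd_gg(2) _ o reg]) (use J in \<open>simp add: JJ_def jac_def\<close>)
    then show "dir f1 p v = 0 \<and> dir f2 p v = 0" unfolding dir_def .
    qed
  qed
qed

end



lemma angle_lemma:
  fixes \<delta> F1 F2 \<theta>0 :: real
  assumes dpos: "\<delta> > 0" and n: "F1\<^sup>2 + F2\<^sup>2 = \<delta>\<^sup>2"
    and u: "cos \<theta>0 * F1 + sin \<theta>0 * F2 > 0"
  defines "uu \<equiv> cos \<theta>0 * F1 + sin \<theta>0 * F2" and "ww \<equiv> - sin \<theta>0 * F1 + cos \<theta>0 * F2"
  shows "F1 = \<delta> * cos (\<theta>0 + arctan (ww * inverse uu)) \<and> F2 = \<delta> * sin (\<theta>0 + arctan (ww * inverse uu))"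
proof -
  have up: "uu > 0" using u uu_def by simp
  have sc: "(sin \<theta>0)\<^sup>2 + (cos \<theta>0)\<^sup>2 = 1" by simp
  have uw: "uu\<^sup>2 + ww\<^sup>2 = \<delta>\<^sup>2"
  proof -
    have "uu\<^sup>2 + ww\<^sup>2 = ((sin \<theta>0)\<^sup>2 + (cos \<theta>0)\<^sup>2) * (F1\<^sup>2 + F2\<^sup>2)"
      unfolding uu_def ww_def by algebra
    then show ?thesis using sc n by simp
  qed
  define r where "r = ww * inverse uu"
  have "1 + r\<^sup>2 = (\<delta> / uu)\<^sup>2"
    using uw up unfolding r_def by (simp add: field_simps power2_eq_square)
  then have sq: "sqrt (1 + r\<^sup>2) = \<delta> / uu" using dpos up by simp
  have ca: "cos (arctan r) = uu / \<delta>" using sq dpos up by (simp add: cos_arctan)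
  have sa: "sin (arctan r) = ww / \<delta>" using sq dpos up by (simp add: sin_arctan r_def field_simps)
  have "\<delta> * cos (\<theta>0 + arctan r) = cos \<theta>0 * uu - sin \<theta>0 * ww"
    using dpos by (simp add: cos_add ca sa field_simps)
  also have "\<dots> = ((sin \<theta>0)\<^sup>2 + (cos \<theta>0)\<^sup>2) * F1" unfolding uu_def ww_def by algebra
  finally have 1: "F1 = \<delta> * cos (\<theta>0 + arctan r)" using sc by simp
  have "\<delta> * sin (\<theta>0 + arctan r) = sin \<theta>0 * uu + cos \<theta>0 * ww"
    using dpos by (simp add: sin_add ca sa field_simps)
  also have "\<dots> = ((sin \<theta>0)\<^sup>2 + (cos \<theta>0)\<^sup>2) * F2" unfolding uu_def ww_def by algebra
  finally have 2: "F2 = \<delta> * sin (\<theta>0 + arctan r)" using sc by simp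
  show ?thesis using 1 2 r_def by simp
qed

lemma bl2: "bounded_linear (\<lambda>v::real\<times>real. (\<alpha> * fst v + \<beta> * snd v, \<gamma> * fst v + \<eta> * snd v))"
proof -
  have "((\<lambda>v::real\<times>real. (\<alpha> * fst v + \<beta> * snd v, \<gamma> * fst v + \<eta> * snd v)) has_derivative
        (\<lambda>v::real\<times>real. (\<alpha> * fst v + \<beta> * snd v, \<gamma> * fst v + \<eta> * snd v))) (at 0)"
    by (auto intro!: derivative_eq_intros)
  then show ?thesis using has_derivative_bounded_linear by blast
qed




lemma sm_cont: "sm UNIV h \<Longrightarrow> continuous_on S h"
  by (intro continuous_at_imp_continuous_on ballI differentiable_imp_continuous_within sm_diff[of UNIV]) auto

lemma inv2:
  fixes g1 g2 a b D v1 v2 :: real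
  assumes "D = a * g2 - b * g1" "D \<noteq> 0"
  shows "(g2 / D * (a * v1 + b * v2) + (- b / D) * (g1 * v1 + g2 * v2),
          (- g1 / D) * (a * v1 + b * v2) + (a / D) * (g1 * v1 + g2 * v2)) = (v1, v2)"
proof -
  have 1: "g2 / D * (a * v1 + b * v2) + (- b / D) * (g1 * v1 + g2 * v2) = v1"
    using assms by (simp add: field_simps; algebra)
  have 2: "(- g1 / D) * (a * v1 + b * v2) + (a / D) * (g1 * v1 + g2 * v2) = v2"
    using assms by (simp add: field_simps; algebra)
  show ?thesis using 1 2 by simp
qed

lemma lx2:
  fixes g1 g2 a b D :: real
  assumes "D = a * g2 - b * g1" "D \<noteq> 0"
  shows "(a * (g2 * inverse D) + b * ((-1) * g1 * inverse D), g1 * (g2 * inverse D) + g2 * ((-1) * g1 * inverse D)) = (1, 0)"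
proof -
  have "a * (g2 * inverse D) + b * ((-1) * g1 * inverse D) = (a * g2 - b * g1) * inverse D" by algebra
  also have "\<dots> = 1" using assms by simp
  finally show ?thesis by (simp add: algebra_simps)
qed

context twofun begin

lemma exists_param:
  fixes \<delta> :: real and p :: "real \<times> real"
  assumes dpos: "\<delta> > 0" and p: "gg p = \<delta>\<^sup>2" and reg: "(pd1 gg p, pd2 gg p) \<noteq> (0,0)"
  shows "\<exists>\<epsilon> (\<gamma> :: real \<Rightarrow> real \<times> real) \<theta> \<gamma>'. \<epsilon> > 0 \<and> \<gamma> 0 = p \<and>
        (\<forall>t\<in>{-\<epsilon><..<\<epsilon>}. gg (\<gamma> t) = \<delta>\<^sup>2) \<and>
        smooth1_on {-\<epsilon><..<\<epsilon>} (fst \<circ> \<gamma>) \<and> smooth1_on {-\<epsilon><..<\<epsilon>} (snd \<circ> \<gamma>) \<and>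
        (\<gamma> has_vector_derivative \<gamma>') (at 0) \<and> \<gamma>' \<noteq> 0 \<and>
        smooth1_on {-\<epsilon><..<\<epsilon>} \<theta> \<and>
        (\<forall>t\<in>{-\<epsilon><..<\<epsilon>}. f1 (\<gamma> t) = \<delta> * cos (\<theta> t) \<and> f2 (\<gamma> t) = \<delta> * sin (\<theta> t))"
proof -
  define a where "a = - pd2 gg p"
  define b where "b = pd1 gg p"
  have "(f1 p / \<delta>)\<^sup>2 + (f2 p / \<delta>)\<^sup>2 = 1"
    using p dpos unfolding gg_def by (simp add: power_divide add_divide_distrib[symmetric])
  then obtain \<theta>0 where th0: "f1 p / \<delta> = cos \<theta>0" "f2 p / \<delta> = sin \<theta>0" by (rule sincos_total_2pi) auto
  have th0': "f1 p = \<delta> * cos \<theta>0" "f2 p = \<delta> * sin \<theta>0" using th0 dpos by (auto simp: field_simps)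
  define u where "u = (\<lambda>x. cos \<theta>0 * f1 x + sin \<theta>0 * f2 x)"
  define w where "w = (\<lambda>x. - sin \<theta>0 * f1 x + cos \<theta>0 * f2 x)"
  define Dt where "Dt = (\<lambda>x. a * pd2 gg x - b * pd1 gg x)"
  define U where "U = {x. Dt x \<noteq> 0} \<inter> {x. 0 < u x}"
  have smDt: "sm UNIV Dt"
  proof -
    have "alg UNIV (\<lambda>x. a * pd2 gg x - b * pd1 gg x)"
      by (rule alg_diff; rule alg.mul; (rule alg.const | (rule alg.base, rule sm_pd1 sm_pd2, rule sm_gg)))
    then show ?thesis unfolding Dt_def by (rule alg_sm[rotated]) simp
  qed
  have smu: "sm UNIV u"
  proof -
    have "alg UNIV (\<lambda>x. cos \<theta>0 * f1 x + sin \<theta>0 * f2 x)"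
      by (rule alg.add; rule alg.mul; (rule alg.const | (rule alg.base, rule sm_f1 sm_f2)))
    then show ?thesis unfolding u_def by (rule alg_sm[rotated]) simp
  qed
  have smw: "sm UNIV w"
  proof -
    have "alg UNIV (\<lambda>x. - sin \<theta>0 * f1 x + cos \<theta>0 * f2 x)"
      by (rule alg.add; rule alg.mul; (rule alg.const | (rule alg.base, rule sm_f1 sm_f2)))
    then show ?thesis unfolding w_def by (rule alg_sm[rotated]) simp
  qed
  have oU: "open U" unfolding U_def
    by (intro open_Int open_Collect_neq open_Collect_less sm_cont smDt smu continuous_on_const)
  have Dtp: "Dt p \<noteq> 0"
  proof -
    have "Dt p = - ((pd1 gg p)\<^sup>2 + (pd2 gg p)\<^sup>2)" unfolding Dt_def a_def b_def by (simp add: power2_eq_square)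
    moreover have "(pd1 gg p)\<^sup>2 + (pd2 gg p)\<^sup>2 \<noteq> 0" using reg by (simp add: sum_power2_eq_zero_iff)
    ultimately show ?thesis by (simp only: neg_equal_0_iff_equal not_False_eq_True)
  qed
  have up: "u p = \<delta>"
  proof -
    show ?thesis unfolding u_def th0' using sin_cos_squared_add3[of \<theta>0] by algebra
  qed
  have pU: "p \<in> U" unfolding U_def using Dtp up dpos by simp
  define \<Phi> where "\<Phi> = (\<lambda>x::real\<times>real. (a * fst x + b * snd x, gg x))"
  define L where "L = (\<lambda>x::real\<times>real. \<lambda>v::real\<times>real. (a * fst v + b * snd v, pd1 gg x * fst v + pd2 gg x * snd v))"
  define \<Phi>' where "\<Phi>' = (\<lambda>x. Blinfun (L x))"
  have Lap: "blinfun_apply (\<Phi>' x) = L x" for x unfolding \<Phi>'_def L_def by (rule bounded_linear_Blinfun_apply[OF bl2])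
  have derf: "(\<Phi> has_derivative blinfun_apply (\<Phi>' x)) (at x)" for x
  proof -
    have "((\<lambda>x::real\<times>real. a * fst x + b * snd x) has_derivative (\<lambda>v. a * fst v + b * snd v)) (at x)"
      by (auto intro!: derivative_eq_intros)
    from has_derivative_Pair[OF this pd_has_derivative[OF diff_gg]]
    show ?thesis unfolding Lap L_def \<Phi>_def .
  qed
  have contf: "continuous_on U \<Phi>'"
  proof (rule continuous_on_blinfun_componentwise)
    fix i :: "real \<times> real"
    have c1: "continuous_on U (pd1 gg)" by (rule sm_cont[OF sm_pd1[OF sm_gg]])
    have c2: "continuous_on U (pd2 gg)" by (rule sm_cont[OF sm_pd2[OF sm_gg]])
    show "continuous_on U (\<lambda>x. blinfun_apply (\<Phi>' x) i)"
      unfolding Lap L_def by (intro continuous_intros c1 c2)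
  qed
  define D0 where "D0 = Dt p"
  define invf where "invf = Blinfun (\<lambda>v::real\<times>real. ((pd2 gg p / D0) * fst v + (- b / D0) * snd v, (- pd1 gg p / D0) * fst v + (a / D0) * snd v))"
  have invap: "blinfun_apply invf = (\<lambda>v::real\<times>real. ((pd2 gg p / D0) * fst v + (- b / D0) * snd v, (- pd1 gg p / D0) * fst v + (a / D0) * snd v))"
    unfolding invf_def by (rule bounded_linear_Blinfun_apply[OF bl2])
  have invf: "invf o\<^sub>L \<Phi>' p = id_blinfun"
  proof (rule blinfun_eqI)
    fix v :: "real \<times> real"
    have D0: "D0 \<noteq> 0" using Dtp D0_def by simp
    show "blinfun_apply (invf o\<^sub>L \<Phi>' p) v = blinfun_apply id_blinfun v"
      using inv2[of D0 a "pd2 gg p" b "pd1 gg p" "fst v" "snd v"] D0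
      unfolding blinfun_apply_blinfun_compose invap Lap L_def
      by (simp add: D0_def Dt_def)
  qed
  obtain U' V \<Psi> \<Psi>' where ift: "open U'" "U' \<subseteq> U" "p \<in> U'" "open V" "\<Phi> p \<in> V" "homeomorphism U' V \<Phi> \<Psi>"
    "\<And>y. y \<in> V \<Longrightarrow> (\<Psi> has_derivative (\<Psi>' y)) (at y)"
    "\<And>y. y \<in> V \<Longrightarrow> \<Psi>' y = inv (blinfun_apply (\<Phi>'(\<Psi> y)))"
    "\<And>y. y \<in> V \<Longrightarrow> bij (blinfun_apply (\<Phi>'(\<Psi> y)))"
    using inverse_function_theorem[OF oU derf contf pU invf] by blast
  define s0 where "s0 = a * fst p + b * snd p"
  have Pp: "\<Phi> p = (s0, \<delta>\<^sup>2)" unfolding \<Phi>_def s0_def using p by simp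
  obtain \<epsilon> where e: "\<epsilon> > 0" "ball (\<Phi> p) \<epsilon> \<subseteq> V" using ift(4,5) openE by blast
  define I where "I = {-\<epsilon><..<\<epsilon>}"
  have oI: "open I" unfolding I_def by simp
  define yy where "yy = (\<lambda>t::real. (s0 + t, \<delta>\<^sup>2))"
  have yyV: "yy t \<in> V" if "t \<in> I" for t
  proof -
    have "dist (\<Phi> p) (yy t) < \<epsilon>" using that unfolding Pp yy_def I_def
      by (simp add: dist_Pair_Pair dist_real_def abs_less_iff)
    then show ?thesis using e by auto
  qed
  define \<gamma> where "\<gamma> = (\<lambda>t. \<Psi> (yy t))"
  have gU': "\<gamma> t \<in> U'" if "t \<in> I" for t
    using homeomorphism_image2[OF ift(6)] yyV[OF that] unfolding \<gamma>_def by blast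
  have gU: "\<gamma> t \<in> U" if "t \<in> I" for t using gU'[OF that] ift(2) by blast
  have Pg: "\<Phi> (\<gamma> t) = yy t" if "t \<in> I" for t
    unfolding \<gamma>_def using homeomorphism_apply2[OF ift(6) yyV[OF that]] .
  have ggg: "gg (\<gamma> t) = \<delta>\<^sup>2" if "t \<in> I" for t
    using Pg[OF that] unfolding \<Phi>_def yy_def by simp
  have I0: "0 \<in> I" unfolding I_def using e by simp
  have g0: "\<gamma> 0 = p"
  proof -
    have "yy 0 = \<Phi> p" unfolding yy_def Pp by simp
    then show ?thesis unfolding \<gamma>_def using homeomorphism_apply1[OF ift(6) ift(3)] by simp
  qed
  define W1 where "W1 = (\<lambda>x. pd2 gg x * inverse (Dt x))"
  define W2 where "W2 = (\<lambda>x. (-1) * pd1 gg x * inverse (Dt x))"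
  have DtU: "\<forall>x\<in>U. Dt x \<noteq> 0" unfolding U_def by simp
  have smW1: "sm U W1"
  proof -
    have "alg U (\<lambda>x. pd2 gg x * inverse (Dt x))"
      by (rule alg.mul; (rule alg.inv[OF _ DtU])?; rule alg.base; rule sm_mono; rule sm_pd2[OF sm_gg] smDt)
    then show ?thesis unfolding W1_def by (rule alg_sm[OF oU])
  qed
  have smW2: "sm U W2"
  proof -
    have "alg U (\<lambda>x. (-1) * pd1 gg x * inverse (Dt x))"
      by (rule alg.mul; (rule alg.inv[OF _ DtU])?; (rule alg.mul)?; (rule alg.const)?; rule alg.base; rule sm_mono; rule sm_pd1[OF sm_gg] smDt)
    then show ?thesis unfolding W2_def by (rule alg_sm[OF oU])
  qed
  have vd: "(\<gamma> has_vector_derivative (W1 (\<gamma> t), W2 (\<gamma> t))) (at t)" if t: "t \<in> I" for t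
  proof -
    have yd: "(yy has_derivative (\<lambda>h. (h, 0))) (at t)" unfolding yy_def
      by (auto intro!: derivative_eq_intros)
    have Pd: "(\<Psi> has_derivative \<Psi>' (yy t)) (at (yy t))" using ift(7)[OF yyV[OF t]] .
    have lin: "linear (\<Psi>' (yy t))" using has_derivative_linear[OF Pd] .
    have "(\<gamma> has_derivative (\<lambda>h. \<Psi>' (yy t) (h, 0))) (at t)"
      unfolding \<gamma>_def using has_derivative_compose[OF yd Pd] by (simp add: o_def)
    moreover have "(\<lambda>h. \<Psi>' (yy t) (h, 0)) = (\<lambda>h. h *\<^sub>R \<Psi>' (yy t) (1, 0))"
    proof
      fix h :: real
      show "\<Psi>' (yy t) (h, 0) = h *\<^sub>R \<Psi>' (yy t) (1, 0)"
        using linear_scale[OF lin, of h "(1,0)"] by simp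
    qed
    ultimately have gv: "(\<gamma> has_vector_derivative \<Psi>' (yy t) (1, 0)) (at t)"
      by (simp add: has_vector_derivative_def)
    define x where "x = \<gamma> t"
    have xU: "x \<in> U" using gU[OF t] x_def by simp
    have Dx: "Dt x \<noteq> 0" using DtU xU by blast
    have Lx: "blinfun_apply (\<Phi>' x) (W1 x, W2 x) = (1, 0)"
      using lx2[OF _ Dx, of a "pd2 gg x" b "pd1 gg x"] unfolding Lap L_def W1_def W2_def Dt_def by simp
    have bj: "bij (blinfun_apply (\<Phi>' x))" using ift(9)[OF yyV[OF t]] unfolding x_def \<gamma>_def .
    have "\<Psi>' (yy t) (1, 0) = inv (blinfun_apply (\<Phi>' x)) (1, 0)"
      using ift(8)[OF yyV[OF t]] unfolding x_def \<gamma>_def by simp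
    also have "\<dots> = (W1 x, W2 x)" unfolding Lx[symmetric] using bj by (simp add: bij_is_inj)
    finally show ?thesis using gv x_def by simp
  qed
  have sfst: "smooth1_on I (fst \<circ> \<gamma>)"
    by (rule curve_smooth[OF oU oI _ smW1 smW2 sm_fst]) (use gU vd in auto)
  have ssnd: "smooth1_on I (snd \<circ> \<gamma>)"
    by (rule curve_smooth[OF oU oI _ smW1 smW2 sm_snd]) (use gU vd in auto)
  define A where "A = (\<lambda>x. \<theta>0 + arctan (w x * inverse (u x)))"
  have uU: "\<forall>x\<in>U. u x \<noteq> 0" unfolding U_def by auto
  have smA: "sm U A"
  proof -
    have "alg U (\<lambda>x. \<theta>0 + arctan (w x * inverse (u x)))"
      by (rule alg.add[OF alg.const alg.atn[OF alg.mul[OF alg.base alg.inv[OF alg.base uU]]]];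
          rule sm_mono; rule smw smu)
    then show ?thesis unfolding A_def by (rule alg_sm[OF oU])
  qed
  have sth: "smooth1_on I (A \<circ> \<gamma>)"
    by (rule curve_smooth[OF oU oI _ smW1 smW2 smA]) (use gU vd in auto)
  have frel: "f1 (\<gamma> t) = \<delta> * cos ((A \<circ> \<gamma>) t) \<and> f2 (\<gamma> t) = \<delta> * sin ((A \<circ> \<gamma>) t)" if t: "t \<in> I" for t
  proof -
    have n: "(f1 (\<gamma> t))\<^sup>2 + (f2 (\<gamma> t))\<^sup>2 = \<delta>\<^sup>2" using ggg[OF t] unfolding gg_def .
    have "u (\<gamma> t) > 0" using gU[OF t] unfolding U_def by simp
    then have uu: "cos \<theta>0 * f1 (\<gamma> t) + sin \<theta>0 * f2 (\<gamma> t) > 0" unfolding u_def .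
    show ?thesis using angle_lemma[OF dpos n uu] unfolding A_def u_def w_def by simp
  qed
  have g'0: "(\<gamma> has_vector_derivative (W1 p, W2 p)) (at 0)" using vd[OF I0] g0 by simp
  have g'n: "(W1 p, W2 p) \<noteq> 0"
  proof
    assume "(W1 p, W2 p) = 0"
    then have "pd2 gg p * inverse (Dt p) = 0" "pd1 gg p * inverse (Dt p) = 0"
      unfolding W1_def W2_def by (auto simp: zero_prod_def)
    then have "pd2 gg p = 0" "pd1 gg p = 0" using Dtp by auto
    then show False using reg by simp
  qed
  show ?thesis
    apply (rule exI[of _ \<epsilon>], rule exI[of _ \<gamma>], rule exI[of _ "A \<circ> \<gamma>"], rule exI[of _ "(W1 p, W2 p)"])
    using e(1) g0 ggg sfst ssnd g'0 g'n sth frel unfolding I_def by blast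
qed

end

theorem lemma5p2:
  fixes f1 f2 :: "real \<times> real \<Rightarrow> real" and \<delta> :: real
  defines "g \<equiv> (\<lambda>x. (f1 x)\<^sup>2 + (f2 x)\<^sup>2)"
  defines "P \<equiv> {x. g x = \<delta>\<^sup>2}"
  defines "J \<equiv> jac f1 f2"
  defines "F1 \<equiv> jac f1 J"
  defines "F2 \<equiv> jac f2 J"
  defines "T \<equiv> (\<lambda>x. (- pd2 g x, pd1 g x))"
  assumes "smooth2 f1" and "smooth2 f2"
  assumes "\<delta> > 0"
  assumes "\<forall>x\<in>P. (pd1 g x, pd2 g x) \<noteq> (0, 0)"
  assumes "P \<noteq> {}"
  shows "(\<forall>p (x :: real \<Rightarrow> real \<times> real) \<theta> \<epsilon>.
            p \<in> P \<and> \<epsilon> > 0 \<and> x 0 = p \<and>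
            (\<forall>t\<in>{-\<epsilon><..<\<epsilon>}. x t \<in> P \<and> (x has_vector_derivative T (x t)) (at t)) \<and>
            smooth1_on {-\<epsilon><..<\<epsilon>} \<theta> \<and>
            (\<forall>t\<in>{-\<epsilon><..<\<epsilon>}. f1 (x t) = \<delta> * cos (\<theta> t) \<and> f2 (x t) = \<delta> * sin (\<theta> t)) \<and>
            crit_restr f1 f2 g (\<delta>\<^sup>2) p
          \<longrightarrow> sgn (deriv (deriv \<theta>) 0) = sgn (f1 p * F1 p + f2 p * F2 p))
       \<and> (\<forall>p\<in>P. nondeg_crit_restr f1 f2 g \<delta> p \<longleftrightarrow> J p = 0 \<and> f1 p * F1 p + f2 p * F2 p \<noteq> 0)"
  proof -
  interpret twofun f1 f2 using \<open>smooth2 f1\<close> \<open>smooth2 f2\<close> by (rule twofun.intro)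
  have gq: "g = gg" unfolding g_def gg_def ..
  have Jq: "J = JJ" unfolding J_def JJ_def ..
  have Qq: "f1 p * F1 p + f2 p * F2 p = QQ p" for p
    unfolding QQ_def F1_def F2_def Jq by simp
  have Tq: "T = (\<lambda>x. (- pd2 gg x, pd1 gg x))" unfolding T_def gq ..
  have dpos: "\<delta> > 0" by (rule \<open>\<delta> > 0\<close>)
  have reg: "\<And>x. gg x = \<delta>\<^sup>2 \<Longrightarrow> (pd1 gg x, pd2 gg x) \<noteq> (0,0)"
    using \<open>\<forall>x\<in>P. (pd1 g x, pd2 g x) \<noteq> (0, 0)\<close> unfolding P_def gq by blast
  have part_a: "\<forall>p (x :: real \<Rightarrow> real \<times> real) \<theta> \<epsilon>.
            p \<in> P \<and> \<epsilon> > 0 \<and> x 0 = p \<and>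
            (\<forall>t\<in>{-\<epsilon><..<\<epsilon>}. x t \<in> P \<and> (x has_vector_derivative T (x t)) (at t)) \<and>
            smooth1_on {-\<epsilon><..<\<epsilon>} \<theta> \<and>
            (\<forall>t\<in>{-\<epsilon><..<\<epsilon>}. f1 (x t) = \<delta> * cos (\<theta> t) \<and> f2 (x t) = \<delta> * sin (\<theta> t)) \<and>
            crit_restr f1 f2 g (\<delta>\<^sup>2) p
          \<longrightarrow> sgn (deriv (deriv \<theta>) 0) = sgn (f1 p * F1 p + f2 p * F2 p)"
  proof (intro allI impI)
    fix p and x :: "real \<Rightarrow> real \<times> real" and \<theta> and \<epsilon> :: real
    assume h: "p \<in> P \<and> \<epsilon> > 0 \<and> x 0 = p \<and>
            (\<forall>t\<in>{-\<epsilon><..<\<epsilon>}. x t \<in> P \<and> (x has_vector_derivative T (x t)) (at t)) \<and>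
            smooth1_on {-\<epsilon><..<\<epsilon>} \<theta> \<and>
            (\<forall>t\<in>{-\<epsilon><..<\<epsilon>}. f1 (x t) = \<delta> * cos (\<theta> t) \<and> f2 (x t) = \<delta> * sin (\<theta> t)) \<and>
            crit_restr f1 f2 g (\<delta>\<^sup>2) p"
    have "deriv (deriv \<theta>) 0 = 4 * QQ (x 0)"
    proof (rule part1[OF dpos])
      show "0 < \<epsilon>" using h by blast
      show "(x has_vector_derivative (- pd2 gg (x t), pd1 gg (x t))) (at t)" if "t \<in> {-\<epsilon><..<\<epsilon>}" for t
        using h that unfolding Tq by blast
      show "smooth1_on {-\<epsilon><..<\<epsilon>} \<theta>" using h by blast
      show "f1 (x t) = \<delta> * cos (\<theta> t) \<and> f2 (x t) = \<delta> * sin (\<theta> t)" if "t \<in> {-\<epsilon><..<\<epsilon>}" for t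
        using h that by blast
    qed
    then have "deriv (deriv \<theta>) 0 = 4 * (f1 p * F1 p + f2 p * F2 p)" using h Qq by simp
    moreover have "sgn (4 * (f1 p * F1 p + f2 p * F2 p)) = sgn (f1 p * F1 p + f2 p * F2 p)"
      by (simp only: sgn_mult) simp
    ultimately show "sgn (deriv (deriv \<theta>) 0) = sgn (f1 p * F1 p + f2 p * F2 p)" by (simp only:)
  qed
  have part_b: "\<forall>p\<in>P. nondeg_crit_restr f1 f2 g \<delta> p \<longleftrightarrow> J p = 0 \<and> f1 p * F1 p + f2 p * F2 p \<noteq> 0"
  proof
    fix p assume pP: "p \<in> P"
    have pg: "gg p = \<delta>\<^sup>2" using pP unfolding P_def gq by simp
    have ci: "crit_restr f1 f2 gg (\<delta>\<^sup>2) p \<longleftrightarrow> JJ p = 0" by (rule crit_iff[OF dpos pg reg[OF pg]])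
    show "nondeg_crit_restr f1 f2 g \<delta> p \<longleftrightarrow> J p = 0 \<and> f1 p * F1 p + f2 p * F2 p \<noteq> 0"
      unfolding Qq Jq gq
    proof
      assume nd: "nondeg_crit_restr f1 f2 gg \<delta> p"
      then have J0: "JJ p = 0" using ci unfolding nondeg_crit_restr_def by blast
      obtain \<epsilon> \<gamma> \<theta> \<gamma>' where d: "\<epsilon> > 0" "\<gamma> 0 = p"
        "\<forall>t\<in>{-\<epsilon><..<\<epsilon>}. gg (\<gamma> t) = \<delta>\<^sup>2"
        "smooth1_on {-\<epsilon><..<\<epsilon>} (fst \<circ> \<gamma>)" "smooth1_on {-\<epsilon><..<\<epsilon>} (snd \<circ> \<gamma>)"
        "(\<gamma> has_vector_derivative \<gamma>') (at 0)" "\<gamma>' \<noteq> 0"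
        "smooth1_on {-\<epsilon><..<\<epsilon>} \<theta>"
        "\<forall>t\<in>{-\<epsilon><..<\<epsilon>}. f1 (\<gamma> t) = \<delta> * cos (\<theta> t) \<and> f2 (\<gamma> t) = \<delta> * sin (\<theta> t)"
        "deriv (deriv \<theta>) 0 \<noteq> 0"
        using nd unfolding nondeg_crit_restr_def by blast
      obtain k where k: "k > 0" "deriv (deriv \<theta>) 0 = k * QQ (\<gamma> 0)"
        using partM[OF dpos d(1) _ reg d(4) d(5) d(6) d(7) d(8)] d(2,3,9) J0 by auto
      then have "QQ p \<noteq> 0" using d(2,10) by auto
      then show "JJ p = 0 \<and> QQ p \<noteq> 0" using J0 by simp
    next
      assume h: "JJ p = 0 \<and> QQ p \<noteq> 0"
      have cr: "crit_restr f1 f2 gg (\<delta>\<^sup>2) p" using ci h by simp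
      obtain \<epsilon> \<gamma> \<theta> \<gamma>' where d: "\<epsilon> > 0" "\<gamma> 0 = p"
        "\<forall>t\<in>{-\<epsilon><..<\<epsilon>}. gg (\<gamma> t) = \<delta>\<^sup>2"
        "smooth1_on {-\<epsilon><..<\<epsilon>} (fst \<circ> \<gamma>)" "smooth1_on {-\<epsilon><..<\<epsilon>} (snd \<circ> \<gamma>)"
        "(\<gamma> has_vector_derivative \<gamma>') (at 0)" "\<gamma>' \<noteq> 0"
        "smooth1_on {-\<epsilon><..<\<epsilon>} \<theta>"
        "\<forall>t\<in>{-\<epsilon><..<\<epsilon>}. f1 (\<gamma> t) = \<delta> * cos (\<theta> t) \<and> f2 (\<gamma> t) = \<delta> * sin (\<theta> t)"
        using exists_param[OF dpos pg reg[OF pg]] by blast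
      obtain k where k: "k > 0" "deriv (deriv \<theta>) 0 = k * QQ (\<gamma> 0)"
        using partM[OF dpos d(1) _ reg d(4) d(5) d(6) d(7) d(8)] d(2,3,9) h by auto
      then have "deriv (deriv \<theta>) 0 \<noteq> 0" using h d(2) by simp
      then show "nondeg_crit_restr f1 f2 gg \<delta> p"
        unfolding nondeg_crit_restr_def using cr d by blast
    qed
  qed
  show ?thesis using part_a part_b by blast
qed

end
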